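(* Let $\mathcal A$ be an $N\times N$ Hermitian matrix and, for $k=0,1,\dots,N-1$, let $\mathcal A^k$ be the matrix whose entries equal those of $\mathcal A$ on the $k$-th supra- and infra-diagonals (entries $(i,i+k)$ and $(i+k,i)$) and are zero elsewhere. Let $\psi\in\mathbb{C}^N$ be a normalized vector (not necessarily an eigenvector), and set $d_k=(\psi,\mathcal A^k\psi)$ and $\lambda=(\psi,\mathcal A\psi)=\sum_{k=0}^{N-1}d_k$. Let $M\le N$ be a positive integer. Then there exist an integer $n\in[0,N-M]$ and a normalized vector $\phi\in\mathbb{C}^N$ with $\phi_j=0$ unless $n+1\le j\le n+M$, such that $$(\phi,\mathcal A\phi)\le\lambda+\frac{C}{M^2}\sum_{k=1}^{M-1}k^2|d_k|+C\sum_{k=M}^{N-1}|d_k|,$$ where $C>0$ is a universal constant. *)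

theory Defs
  imports Complex_Main
begin

text \<open>N x N complex matrices are represented as functions nat => nat => complex,
  vectors in C^N as functions nat => complex; indices range over 1..N.\<close>

definition hermitian_mat :: "nat \<Rightarrow> (nat \<Rightarrow> nat \<Rightarrow> complex) \<Rightarrow> bool" where
  "hermitian_mat N A \<longleftrightarrow> (\<forall>i\<in>{1..N}. \<forall>j\<in>{1..N}. A j i = cnj (A i j))"

definition inner_mat :: "nat \<Rightarrow> (nat \<Rightarrow> complex) \<Rightarrow> (nat \<Rightarrow> nat \<Rightarrow> complex) \<Rightarrow> (nat \<Rightarrow> complex) \<Rightarrow> complex" where
  "inner_mat N x A y = (\<Sum>i=1..N. cnj (x i) * (\<Sum>j=1..N. A i j * y j))"

definition vnorm2 :: "nat \<Rightarrow> (nat \<Rightarrow> complex) \<Rightarrow> real" where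
  "vnorm2 N x = (\<Sum>i=1..N. (cmod (x i))\<^sup>2)"

definition band :: "(nat \<Rightarrow> nat \<Rightarrow> complex) \<Rightarrow> nat \<Rightarrow> (nat \<Rightarrow> nat \<Rightarrow> complex)" where
  "band A k = (\<lambda>i j. if j = i + k \<or> i = j + k then A i j else 0)"

end

theory Submission
  imports Defs
begin

definition chi :: "nat \<Rightarrow> int \<Rightarrow> real" where
  "chi M m = real_of_int (max 0 (min m (int M + 1 - m)))"

definition GG :: "nat \<Rightarrow> int \<Rightarrow> real" where
  "GG M t = (\<Sum>m\<in>{1..int M}. chi M m * chi M (m + t))"

lemma chi_supp: "m \<notin> {1..int M} \<Longrightarrow> chi M m = 0"
  unfolding chi_def by auto

lemma chi_nonneg: "chi M m \<ge> 0"
  unfolding chi_def by auto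

lemma chi_lip: "\<bar>chi M a - chi M b\<bar> \<le> real_of_int \<bar>a - b\<bar>"
proof -
  have "\<bar>max 0 (min a (int M + 1 - a)) - max 0 (min b (int M + 1 - b))\<bar> \<le> \<bar>a - b\<bar>"
    by (simp add: min_def max_def abs_if)
  then show ?thesis unfolding chi_def
    by (metis of_int_abs of_int_diff of_int_le_iff)
qed

lemma supp_sum:
  fixes h :: "int \<Rightarrow> 'a::comm_monoid_add"
  assumes "\<And>m. m \<notin> {a..b} \<Longrightarrow> h m = 0" "{a..b} \<subseteq> {c..d}"
  shows "sum h {c..d} = sum h {a..b}"
  by (rule sum.mono_neutral_right) (use assms in auto)

lemma shift_sum:
  fixes h :: "int \<Rightarrow> 'a::comm_monoid_add"
  shows "(\<Sum>m\<in>{c..d}. h (m + t)) = sum h {c+t..d+t}"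
  by (rule sum.reindex_bij_witness[of _ "\<lambda>m. m - t" "\<lambda>m. m + t"]) auto

lemma GG_sym: "GG M (-t) = GG M t"
proof -
  have "GG M (-t) = (\<Sum>m\<in>{1..int M}. chi M (m + (-t)) * chi M m)"
    unfolding GG_def by (simp add: mult.commute)
  also have "\<dots> = (\<Sum>m\<in>{1 + (-t)..int M + (-t)}. chi M m * chi M (m + t))"
    by (subst shift_sum[symmetric]) simp
  also have "\<dots> = (\<Sum>m\<in>{1 - \<bar>t\<bar>..int M + \<bar>t\<bar>}. chi M m * chi M (m + t))"
    by (rule supp_sum[symmetric]) (auto simp: chi_supp)
  also have "\<dots> = GG M t" unfolding GG_def
    by (rule supp_sum) (auto simp: chi_supp)
  finally show ?thesis .
qed

lemma GG_transl:
  assumes "1 \<le> i" "i \<le> int N" 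
  shows "(\<Sum>n\<in>{- int M..int N}. chi M (i - n) * chi M (j - n)) = GG M (j - i)"
proof -
  have "(\<Sum>n\<in>{- int M..int N}. chi M (i - n) * chi M (j - n))
      = (\<Sum>m\<in>{i - int N..i + int M}. chi M m * chi M (m + (j - i)))"
    by (rule sum.reindex_bij_witness[of _ "\<lambda>m. i - m" "\<lambda>n. i - n"]) auto
  also have "\<dots> = GG M (j - i)" unfolding GG_def
    by (rule supp_sum) (use assms in \<open>auto simp: chi_supp\<close>)
  finally show ?thesis .
qed

lemma GG_large: "k \<ge> int M \<Longrightarrow> GG M k = 0"
  unfolding GG_def by (rule sum.neutral) (auto simp: chi_supp)

lemma GG_diff:
  assumes "0 \<le> k" "k \<le> int M"
  shows "0 \<le> GG M 0 - GG M k \<and> GG M 0 - GG M k \<le> real M * (real_of_int k)\<^sup>2"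
proof -
  let ?R = "{1 - k..int M}"
  have g0: "GG M 0 = (\<Sum>m\<in>{1..int M}. (chi M m)\<^sup>2)" unfolding GG_def by (simp add: power2_eq_square)
  have e1: "(\<Sum>m\<in>?R. (chi M m)\<^sup>2) = GG M 0"
    unfolding g0 by (rule supp_sum) (use assms in \<open>auto simp: chi_supp\<close>)
  have "(\<Sum>m\<in>?R. (chi M (m + k))\<^sup>2) = (\<Sum>m\<in>{1..int M + k}. (chi M m)\<^sup>2)"
    by (subst shift_sum) simp
  also have "\<dots> = GG M 0"
    unfolding g0 by (rule supp_sum) (use assms in \<open>auto simp: chi_supp\<close>)
  finally have e2: "(\<Sum>m\<in>?R. (chi M (m + k))\<^sup>2) = GG M 0" .
  have e3: "(\<Sum>m\<in>?R. chi M m * chi M (m + k)) = GG M k"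
    unfolding GG_def by (rule supp_sum) (use assms in \<open>auto simp: chi_supp\<close>)
  have "(\<Sum>m\<in>?R. (chi M (m + k) - chi M m)\<^sup>2)
     = (\<Sum>m\<in>?R. (chi M (m + k))\<^sup>2) + (\<Sum>m\<in>?R. (chi M m)\<^sup>2) - 2 * (\<Sum>m\<in>?R. chi M m * chi M (m + k))"
    by (simp add: power2_diff sum.distrib sum_subtractf sum_distrib_left algebra_simps)
  then have key: "(\<Sum>m\<in>?R. (chi M (m + k) - chi M m)\<^sup>2) = 2 * (GG M 0 - GG M k)"
    using e1 e2 e3 by simp
  have "(\<Sum>m\<in>?R. (chi M (m + k) - chi M m)\<^sup>2) \<le> (\<Sum>m\<in>?R. (real_of_int k)\<^sup>2)"
  proof (rule sum_mono)
    fix m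
    have "\<bar>chi M (m + k) - chi M m\<bar> \<le> real_of_int k" using chi_lip[of M "m+k" m] assms by simp
    then show "(chi M (m + k) - chi M m)\<^sup>2 \<le> (real_of_int k)\<^sup>2"
      by (metis abs_ge_zero order_trans power2_abs power_mono)
  qed
  also have "\<dots> = real_of_int (int M + k) * (real_of_int k)\<^sup>2" using assms by simp
  also have "\<dots> \<le> real_of_int (2 * int M) * (real_of_int k)\<^sup>2"
    by (rule mult_right_mono) (use assms in auto)
  finally have "2 * (GG M 0 - GG M k) \<le> 2 * real M * (real_of_int k)\<^sup>2" using key by simp
  moreover have "0 \<le> (\<Sum>m\<in>?R. (chi M (m + k) - chi M m)\<^sup>2)" by (rule sum_nonneg) simp
  ultimately show ?thesis using key by simp
qed

lemma GG0_lower: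
  assumes "0 < M"
  shows "(real M)^3 \<le> 32 * GG M 0"
proof -
  define a where "a = (int M + 3) div 4"
  define b where "b = int M + 1 - a"
  have a1: "4 * a \<ge> int M" "4 * a \<le> int M + 3" "1 \<le> a" using assms unfolding a_def by auto
  have sub: "{a..b} \<subseteq> {1..int M}" using a1 unfolding b_def by auto
  have "(\<Sum>m\<in>{a..b}. (real_of_int a)\<^sup>2) \<le> (\<Sum>m\<in>{a..b}. chi M m * chi M m)"
  proof (rule sum_mono)
    fix m assume "m \<in> {a..b}"
    then have "a \<le> max 0 (min m (int M + 1 - m))" unfolding b_def by auto
    then have "real_of_int a \<le> chi M m" unfolding chi_def by linarith
    then show "(real_of_int a)\<^sup>2 \<le> chi M m * chi M m" 
      using a1 by (metis mult_mono of_int_0_le_iff order.trans power2_eq_square zero_le_one)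
  qed
  also have "\<dots> \<le> (\<Sum>m\<in>{1..int M}. chi M m * chi M m)"
    by (rule sum_mono2) (use sub in \<open>auto simp: chi_nonneg\<close>)
  also have "\<dots> = GG M 0" unfolding GG_def by simp
  finally have L: "real_of_int (b - a + 1) * (real_of_int a)\<^sup>2 \<le> GG M 0"
    using a1 unfolding b_def by simp
  have c: "2 * (b - a + 1) \<ge> int M" using a1 unfolding b_def by simp
  have "(real M)^3 = real M * (real M)\<^sup>2" by (simp add: power2_eq_square power3_eq_cube)
  also have "\<dots> \<le> real_of_int (2 * (b - a + 1)) * (real_of_int (4 * a))\<^sup>2"
  proof (rule mult_mono)
    show "real M \<le> real_of_int (2 * (b - a + 1))" using c by linarith
    show "(real M)\<^sup>2 \<le> (real_of_int (4 * a))\<^sup>2" 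
      by (rule power_mono) (use a1 in linarith)+
  qed (use c in auto)
  also have "\<dots> = 32 * (real_of_int (b - a + 1) * (real_of_int a)\<^sup>2)"
    by (simp add: power2_eq_square)
  also have "\<dots> \<le> 32 * GG M 0" using L by simp
  finally show ?thesis .
qed

lemma band_sum:
  assumes "i \<in> {1..N}" "j \<in> {1..N}"
  shows "(\<Sum>k=0..N-1. complex_of_real (g k) * band A k i j)
       = complex_of_real (g (nat \<bar>int j - int i\<bar>)) * A i j"
proof -
  have "(\<Sum>k=0..N-1. complex_of_real (g k) * band A k i j)
      = (\<Sum>k=0..N-1. if k = nat \<bar>int j - int i\<bar> then complex_of_real (g k) * A i j else 0)"
    by (rule sum.cong) (auto simp: band_def)
  also have "\<dots> = complex_of_real (g (nat \<bar>int j - int i\<bar>)) * A i j"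
    using assms by (subst sum.delta) auto
  finally show ?thesis .
qed

lemma d_expand: "inner_mat N x B y = (\<Sum>i=1..N. \<Sum>j=1..N. cnj (x i) * B i j * y j)"
  unfolding inner_mat_def by (simp add: sum_distrib_left mult.assoc)

lemma sum_gd:
  "(\<Sum>k=0..N-1. complex_of_real (g k) * inner_mat N x (band A k) x)
   = (\<Sum>i=1..N. \<Sum>j=1..N. complex_of_real (g (nat \<bar>int j - int i\<bar>)) * (cnj (x i) * A i j * x j))"
proof -
  have "(\<Sum>k=0..N-1. complex_of_real (g k) * inner_mat N x (band A k) x)
     = (\<Sum>k=0..N-1. \<Sum>i=1..N. \<Sum>j=1..N. cnj (x i) * (complex_of_real (g k) * band A k i j) * x j)"
    unfolding d_expand by (simp add: sum_distrib_left algebra_simps)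
  also have "\<dots> = (\<Sum>i=1..N. \<Sum>j=1..N. \<Sum>k=0..N-1. cnj (x i) * (complex_of_real (g k) * band A k i j) * x j)"
    by (subst sum.swap, rule sum.cong[OF refl], rule sum.swap)
  also have "\<dots> = (\<Sum>i=1..N. \<Sum>j=1..N. cnj (x i) * (\<Sum>k=0..N-1. complex_of_real (g k) * band A k i j) * x j)"
    by (simp add: sum_distrib_left sum_distrib_right)
  also have "\<dots> = (\<Sum>i=1..N. \<Sum>j=1..N. complex_of_real (g (nat \<bar>int j - int i\<bar>)) * (cnj (x i) * A i j * x j))"
  proof (intro sum.cong refl)
    fix i j assume "i \<in> {1..N}" "j \<in> {1..N}"
    from band_sum[OF this, of g A] show "cnj (x i) * (\<Sum>k=0..N-1. complex_of_real (g k) * band A k i j) * x j =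
         complex_of_real (g (nat \<bar>int j - int i\<bar>)) * (cnj (x i) * A i j * x j)" by (simp add: mult_ac)
  qed
  finally show ?thesis .
qed

definition phi :: "nat \<Rightarrow> (nat \<Rightarrow> complex) \<Rightarrow> int \<Rightarrow> nat \<Rightarrow> complex" where
  "phi M x n i = complex_of_real (chi M (int i - n)) * x i"

lemma E_expand: "inner_mat N (phi M x n) A (phi M x n)
   = (\<Sum>i=1..N. \<Sum>j=1..N. complex_of_real (chi M (int i - n) * chi M (int j - n)) * (cnj (x i) * A i j * x j))"
  unfolding d_expand phi_def by (simp add: algebra_simps)

lemma sum_E:
  "(\<Sum>n\<in>{- int M..int N}. inner_mat N (phi M x n) A (phi M x n))
   = (\<Sum>i=1..N. \<Sum>j=1..N. complex_of_real (GG M (int (nat \<bar>int j - int i\<bar>))) * (cnj (x i) * A i j * x j))"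
proof -
  have "(\<Sum>n\<in>{- int M..int N}. inner_mat N (phi M x n) A (phi M x n))
     = (\<Sum>i=1..N. \<Sum>j=1..N. \<Sum>n\<in>{- int M..int N}. complex_of_real (chi M (int i - n) * chi M (int j - n)) * (cnj (x i) * A i j * x j))"
    unfolding E_expand by (subst sum.swap) (simp add: sum.swap[of _ "{- int M..int N}"])
  also have "\<dots> = (\<Sum>i=1..N. \<Sum>j=1..N. complex_of_real (\<Sum>n\<in>{- int M..int N}. chi M (int i - n) * chi M (int j - n)) * (cnj (x i) * A i j * x j))"
    by (simp add: sum_distrib_right)
  also have "\<dots> = (\<Sum>i=1..N. \<Sum>j=1..N. complex_of_real (GG M (int (nat \<bar>int j - int i\<bar>))) * (cnj (x i) * A i j * x j))"
  proof (intro sum.cong refl)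
    fix i j assume "i \<in> {1..N}" "j \<in> {1..N}"
    then have "(\<Sum>n\<in>{- int M..int N}. chi M (int i - n) * chi M (int j - n)) = GG M (int j - int i)"
      by (intro GG_transl) auto
    also have "\<dots> = GG M (int (nat \<bar>int j - int i\<bar>))"
      by (cases "int j - int i \<ge> 0") (auto simp: GG_sym[of M "int i - int j", symmetric])
    finally show "complex_of_real (\<Sum>n\<in>{- int M..int N}. chi M (int i - n) * chi M (int j - n)) * (cnj (x i) * A i j * x j)
       = complex_of_real (GG M (int (nat \<bar>int j - int i\<bar>))) * (cnj (x i) * A i j * x j)" by simp
  qed
  finally show ?thesis .
qed

lemma sum_w:
  "(\<Sum>n\<in>{- int M..int N}. vnorm2 N (phi M x n)) = GG M 0 * vnorm2 N x"
proof -
  have "(\<Sum>n\<in>{- int M..int N}. vnorm2 N (phi M x n))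
      = (\<Sum>i=1..N. (\<Sum>n\<in>{- int M..int N}. chi M (int i - n) * chi M (int i - n)) * (cmod (x i))\<^sup>2)"
    unfolding vnorm2_def phi_def
    by (subst sum.swap) (simp add: sum_distrib_right norm_mult power_mult_distrib power2_eq_square abs_mult chi_nonneg mult_ac sum_distrib_left)
  also have "\<dots> = (\<Sum>i=1..N. GG M 0 * (cmod (x i))\<^sup>2)"
    by (intro sum.cong refl) (subst GG_transl, auto)
  finally show ?thesis by (simp add: vnorm2_def sum_distrib_left)
qed

theorem theoremA1:
  shows "\<exists>C::real. C > 0 \<and>
    (\<forall>(N::nat) (A::nat \<Rightarrow> nat \<Rightarrow> complex) (\<psi>::nat \<Rightarrow> complex) (M::nat).
      hermitian_mat N A \<and> vnorm2 N \<psi> = 1 \<and> 0 < M \<and> M \<le> N \<longrightarrow>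
      (\<exists>(n::nat) (\<phi>::nat \<Rightarrow> complex).
         n \<le> N - M \<and> vnorm2 N \<phi> = 1 \<and>
         (\<forall>j\<in>{1..N}. \<not> (n + 1 \<le> j \<and> j \<le> n + M) \<longrightarrow> \<phi> j = 0) \<and>
         Re (inner_mat N \<phi> A \<phi>) \<le>
           Re (inner_mat N \<psi> A \<psi>)
           + C / (real M)\<^sup>2 * (\<Sum>k=1..M-1. (real k)\<^sup>2 * cmod (inner_mat N \<psi> (band A k) \<psi>))
           + C * (\<Sum>k=M..N-1. cmod (inner_mat N \<psi> (band A k) \<psi>))))"
proof (intro exI[of _ "32::real"] conjI allI impI)
  show "(0::real) < 32" by simp
  fix N :: nat and A :: "nat \<Rightarrow> nat \<Rightarrow> complex" and \<psi> :: "nat \<Rightarrow> complex" and M :: nat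
  assume H: "hermitian_mat N A \<and> vnorm2 N \<psi> = 1 \<and> 0 < M \<and> M \<le> N"
  then have psi: "vnorm2 N \<psi> = 1" and M0: "0 < M" and MN: "M \<le> N" by auto
  define S where "S = {- int M..int N}"
  define E where "E n = Re (inner_mat N (phi M \<psi> n) A (phi M \<psi> n))" for n
  define w where "w n = vnorm2 N (phi M \<psi> n)" for n
  define g where "g k = GG M (int k)" for k :: nat
  define G0 where "G0 = GG M 0"
  define d where "d k = inner_mat N \<psi> (band A k) \<psi>" for k
  have G0L: "(real M)^3 \<le> 32 * G0" using GG0_lower[OF M0] unfolding G0_def .
  have G0pos: "G0 > 0" using G0L M0 by (smt (verit) of_nat_0_less_iff zero_less_power)
  define D where "D = Re (\<Sum>k=0..N-1. complex_of_real (g k) * d k)"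
  define \<mu> where "\<mu> = D / G0"
  have sumE: "(\<Sum>n\<in>S. E n) = D"
    unfolding E_def D_def d_def S_def g_def
    by (simp only: Re_sum[symmetric] sum_E sum_gd)
  have sumw: "(\<Sum>n\<in>S. w n) = G0" using sum_w[where M=M and N=N and x=\<psi>] psi unfolding w_def S_def G0_def by simp
  have wnn: "w n \<ge> 0" for n unfolding w_def vnorm2_def by (rule sum_nonneg) simp
  have w0: "E n = 0" if "w n = 0" for n
  proof -
    have "\<forall>i\<in>{1..N}. (cmod (phi M \<psi> n i))\<^sup>2 = 0"
      using that unfolding w_def vnorm2_def by (subst sum_nonneg_eq_0_iff[symmetric]) auto
    then have "\<forall>i\<in>{1..N}. phi M \<psi> n i = 0" by simp
    then show ?thesis unfolding E_def inner_mat_def by simp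
  qed
  have "\<exists>n\<in>S. w n > 0 \<and> E n \<le> \<mu> * w n"
  proof (rule ccontr)
    assume neg: "\<not> ?thesis"
    have pos: "0 \<le> E n - \<mu> * w n" if "n \<in> S" for n
    proof (cases "w n = 0")
      case True then show ?thesis using w0 by simp
    next
      case False then have "w n > 0" using wnn[of n] by simp
      then show ?thesis using neg that by auto
    qed
    have "\<exists>n\<in>S. w n > 0"
    proof (rule ccontr)
      assume "\<not> (\<exists>n\<in>S. w n > 0)"
      then have "(\<Sum>n\<in>S. w n) \<le> 0" by (intro sum_nonpos) auto
      then show False using sumw G0pos by simp
    qed
    then obtain n0 where n0: "n0 \<in> S" "w n0 > 0" by blast
    then have "E n0 - \<mu> * w n0 > 0" using neg by auto
    then have "0 < (\<Sum>n\<in>S. E n - \<mu> * w n)"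
      using n0 pos by (intro sum_pos2[of S n0]) (auto simp: S_def)
    also have "\<dots> = D - \<mu> * G0" by (simp add: sum_subtractf sum_distrib_left[symmetric] sumE sumw)
    also have "\<dots> = 0" unfolding \<mu>_def using G0pos by simp
    finally show False by simp
  qed
  then obtain n where nS: "n \<in> S" and wpos: "w n > 0" and En: "E n \<le> \<mu> * w n" by blast
  define s where "s = sqrt (w n)"
  have spos: "s > 0" and ss: "s * s = w n" unfolding s_def using wpos by auto
  define \<phi> where "\<phi> i = phi M \<psi> n i / complex_of_real s" for i
  have norm1: "vnorm2 N \<phi> = 1"
  proof -
    have "vnorm2 N \<phi> = (\<Sum>i=1..N. (cmod (phi M \<psi> n i))\<^sup>2) / (s * s)"
      unfolding vnorm2_def \<phi>_def using spos
      by (simp add: norm_divide power_divide sum_divide_distrib power2_eq_square)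
    also have "\<dots> = 1" using ss wpos unfolding w_def vnorm2_def by simp
    finally show ?thesis .
  qed
  have cw: "complex_of_real (w n) = complex_of_real s * complex_of_real s" using ss by (metis of_real_mult)
  have Eq: "inner_mat N \<phi> A \<phi> = inner_mat N (phi M \<psi> n) A (phi M \<psi> n) / complex_of_real (w n)"
    unfolding d_expand \<phi>_def sum_divide_distrib cw using spos
    by (intro sum.cong refl) (simp add: field_simps)
  have Rphi: "Re (inner_mat N \<phi> A \<phi>) \<le> \<mu>"
  proof -
    have "Re (inner_mat N \<phi> A \<phi>) = E n / w n" unfolding Eq E_def by (simp add: Re_divide_of_real)
    also have "\<dots> \<le> \<mu>" using En wpos by (simp add: divide_le_eq)
    finally show ?thesis .
  qed
  define n' where "n' = nat (max 0 (min n (int N - int M)))"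
  have n'le: "n' \<le> N - M" unfolding n'_def using MN by auto
  have supp: "\<forall>j\<in>{1..N}. \<not> (n' + 1 \<le> j \<and> j \<le> n' + M) \<longrightarrow> \<phi> j = 0"
  proof (intro ballI impI)
    fix j assume j: "j \<in> {1..N}" "\<not> (n' + 1 \<le> j \<and> j \<le> n' + M)"
    have "int j - n \<notin> {1..int M}"
    proof
      assume "int j - n \<in> {1..int M}"
      then show False using j MN unfolding n'_def by auto
    qed
    then show "\<phi> j = 0" unfolding \<phi>_def phi_def by (simp add: chi_supp)
  qed
  have lam: "inner_mat N \<psi> A \<psi> = (\<Sum>k=0..N-1. d k)"
    using sum_gd[of "\<lambda>_. 1" N \<psi> A] unfolding d_def by (simp add: d_expand)
  have "\<mu> - Re (inner_mat N \<psi> A \<psi>) = (\<Sum>k=0..N-1. (g k - G0) / G0 * Re (d k))"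
    unfolding \<mu>_def D_def lam using G0pos
    by (simp add: Re_sum sum_divide_distrib sum_subtractf[symmetric] field_simps)
  also have "\<dots> \<le> (\<Sum>k=0..N-1. (if k = 0 then 0 else if k < M then 32 / (real M)\<^sup>2 * ((real k)\<^sup>2 * cmod (d k)) else 32 * cmod (d k)))"
  proof (rule sum_mono)
    fix k assume k: "k \<in> {0..N-1}"
    have Red: "\<bar>Re (d k)\<bar> \<le> cmod (d k)" by (rule abs_Re_le_cmod)
    show "(g k - G0) / G0 * Re (d k) \<le> (if k = 0 then 0 else if k < M then 32 / (real M)\<^sup>2 * ((real k)\<^sup>2 * cmod (d k)) else 32 * cmod (d k))"
    proof (cases "k = 0")
      case True then show ?thesis unfolding g_def G0_def by simp
    next
      case k0: False
      show ?thesis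
      proof (cases "k < M")
        case True
        have gd: "0 \<le> G0 - g k" "G0 - g k \<le> real M * (real k)\<^sup>2"
          using GG_diff[of "int k" M] True unfolding g_def G0_def by auto
        have "(g k - G0) / G0 * Re (d k) \<le> (G0 - g k) / G0 * cmod (d k)"
        proof -
          have "(g k - G0) / G0 * Re (d k) \<le> \<bar>(g k - G0) / G0 * Re (d k)\<bar>" by (rule abs_ge_self)
          also have "\<dots> = (G0 - g k) / G0 * \<bar>Re (d k)\<bar>" using gd G0pos by (simp add: abs_mult)
          also have "\<dots> \<le> (G0 - g k) / G0 * cmod (d k)"
            using gd G0pos Red by (intro mult_left_mono) auto
          finally show ?thesis .
        qed
        also have "\<dots> \<le> (real M * (real k)\<^sup>2) / G0 * cmod (d k)"
          using gd G0pos by (intro mult_right_mono divide_right_mono) auto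
        also have "\<dots> \<le> 32 / (real M)\<^sup>2 * ((real k)\<^sup>2 * cmod (d k))"
        proof -
          have "real M * (real k)\<^sup>2 / G0 \<le> 32 / (real M)\<^sup>2 * (real k)\<^sup>2"
          proof -
            have "real M * (real k)\<^sup>2 * (real M)\<^sup>2 = (real M)^3 * (real k)\<^sup>2"
              by (simp add: power2_eq_square power3_eq_cube)
            also have "\<dots> \<le> 32 * G0 * (real k)\<^sup>2" using G0L by (intro mult_right_mono) auto
            finally show ?thesis using G0pos M0 by (simp add: field_simps)
          qed
          then show ?thesis by (metis mult.assoc mult_right_mono norm_ge_zero)
        qed
        finally show ?thesis using k0 True by simp
      next
        case False
        have "g k = 0" unfolding g_def using False by (intro GG_large) simp
        then have "(g k - G0) / G0 * Re (d k) = - Re (d k)" using G0pos by simp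
        also have "\<dots> \<le> 32 * cmod (d k)" using Red by linarith
        finally show ?thesis using k0 False by simp
      qed
    qed
  qed
  also have "\<dots> = 32 / (real M)\<^sup>2 * (\<Sum>k=1..M-1. (real k)\<^sup>2 * cmod (d k)) + 32 * (\<Sum>k=M..N-1. cmod (d k))"
  proof -
    let ?b = "\<lambda>k. (if k = 0 then 0 else if k < M then 32 / (real M)\<^sup>2 * ((real k)\<^sup>2 * cmod (d k)) else 32 * cmod (d k))"
    have U: "{0..N-1} = {0} \<union> ({1..M-1} \<union> {M..N-1})" using M0 MN by auto
    have "sum ?b {0..N-1} = sum ?b {1..M-1} + sum ?b {M..N-1}"
    proof -
      have d1: "{0} \<inter> ({1..M-1} \<union> {M..N-1}) = {}" using M0 by auto
      have d2: "{1..M-1} \<inter> {M..N-1} = {}" by auto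
      have e1: "sum ?b ({0} \<union> ({1..M-1} \<union> {M..N-1})) = sum ?b {0} + sum ?b ({1..M-1} \<union> {M..N-1})"
        by (rule sum.union_disjoint[OF _ _ d1]) auto
      have e2: "sum ?b ({1..M-1} \<union> {M..N-1}) = sum ?b {1..M-1} + sum ?b {M..N-1}"
        by (rule sum.union_disjoint[OF _ _ d2]) auto
      have e0: "sum ?b {0} = 0" by simp
      show ?thesis unfolding U e1 e2 e0 by simp
    qed
    also have "sum ?b {1..M-1} = (\<Sum>k=1..M-1. 32 / (real M)\<^sup>2 * ((real k)\<^sup>2 * cmod (d k)))"
      using M0 by (intro sum.cong refl) auto
    also have "sum ?b {M..N-1} = (\<Sum>k=M..N-1. 32 * cmod (d k))"
      using M0 by (intro sum.cong refl) auto
    finally show ?thesis by (simp add: sum_distrib_left)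
  qed
  finally have "\<mu> \<le> Re (inner_mat N \<psi> A \<psi>) + 32 / (real M)\<^sup>2 * (\<Sum>k=1..M-1. (real k)\<^sup>2 * cmod (d k)) + 32 * (\<Sum>k=M..N-1. cmod (d k))"
    by simp
  then show "\<exists>(n::nat) (\<phi>::nat \<Rightarrow> complex).
         n \<le> N - M \<and> vnorm2 N \<phi> = 1 \<and>
         (\<forall>j\<in>{1..N}. \<not> (n + 1 \<le> j \<and> j \<le> n + M) \<longrightarrow> \<phi> j = 0) \<and>
         Re (inner_mat N \<phi> A \<phi>) \<le>
           Re (inner_mat N \<psi> A \<psi>)
           + 32 / (real M)\<^sup>2 * (\<Sum>k=1..M-1. (real k)\<^sup>2 * cmod (inner_mat N \<psi> (band A k) \<psi>))
           + 32 * (\<Sum>k=M..N-1. cmod (inner_mat N \<psi> (band A k) \<psi>))"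
    using n'le norm1 supp Rphi unfolding d_def by fastforce
qed

end
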